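(* Let $T$ be a tree with $k$ leaves, let $1\le l$ be an integer, and let $s$ and $t$ be disjoint subtrees of $T$ such that $s$ has $l$ boundary nodes and $t$ has $k-l+2$ boundary nodes. Then every node of $T$ of degree greater than two belongs to $s$ or to $t$.
   Context: A subtree of a tree $T$ is a nonempty set of nodes inducing a connected subgraph. A boundary node of a subtree $t$ of $T$ is a node of $t$ that has a neighbour in $T$ not belonging to $t$. *)

theory Defs
  imports Main
begin

definition simple_graph :: "'a set \<Rightarrow> ('a \<Rightarrow> 'a \<Rightarrow> bool) \<Rightarrow> bool" where
  "simple_graph V E \<longleftrightarrow> finite V \<and> (\<forall>x y. E x y \<longrightarrow> x \<in> V \<and> y \<in> V)
     \<and> (\<forall>x y. E x y \<longrightarrow> E y x) \<and> (\<forall>x. \<not> E x x)"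

definition connected_on :: "('a \<Rightarrow> 'a \<Rightarrow> bool) \<Rightarrow> 'a set \<Rightarrow> bool" where
  "connected_on E S \<longleftrightarrow> (\<forall>x\<in>S. \<forall>y\<in>S. (\<lambda>a b. E a b \<and> a \<in> S \<and> b \<in> S)\<^sup>*\<^sup>* x y)"

definition is_cycle :: "('a \<Rightarrow> 'a \<Rightarrow> bool) \<Rightarrow> 'a list \<Rightarrow> bool" where
  "is_cycle E cs \<longleftrightarrow> length cs \<ge> 3 \<and> distinct cs
     \<and> (\<forall>i. Suc i < length cs \<longrightarrow> E (cs ! i) (cs ! Suc i))
     \<and> E (last cs) (hd cs)"

definition tree :: "'a set \<Rightarrow> ('a \<Rightarrow> 'a \<Rightarrow> bool) \<Rightarrow> bool" where
  "tree V E \<longleftrightarrow> simple_graph V E \<and> V \<noteq> {} \<and> connected_on E V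
     \<and> (\<nexists>cs. is_cycle E cs)"

definition degree :: "'a set \<Rightarrow> ('a \<Rightarrow> 'a \<Rightarrow> bool) \<Rightarrow> 'a \<Rightarrow> nat" where
  "degree V E v = card {u \<in> V. E v u}"

definition leaves :: "'a set \<Rightarrow> ('a \<Rightarrow> 'a \<Rightarrow> bool) \<Rightarrow> 'a set" where
  "leaves V E = {v \<in> V. degree V E v = 1}"

definition subtree :: "'a set \<Rightarrow> ('a \<Rightarrow> 'a \<Rightarrow> bool) \<Rightarrow> 'a set \<Rightarrow> bool" where
  "subtree V E S \<longleftrightarrow> S \<noteq> {} \<and> S \<subseteq> V \<and> connected_on E S"

definition boundary :: "'a set \<Rightarrow> ('a \<Rightarrow> 'a \<Rightarrow> bool) \<Rightarrow> 'a set \<Rightarrow> 'a set" where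
  "boundary V E S = {v \<in> S. \<exists>u\<in>V. E v u \<and> u \<notin> S}"

end

theory Submission
  imports Defs
begin

fun walk :: "('a \<Rightarrow> 'a \<Rightarrow> bool) \<Rightarrow> 'a list \<Rightarrow> bool" where
  "walk E [] = True"
| "walk E [x] = True"
| "walk E (x#y#xs) = (E x y \<and> walk E (y#xs))"

lemma walk_Cons: "walk E (x#xs) \<longleftrightarrow> (xs = [] \<or> (E x (hd xs) \<and> walk E xs))"
  by (cases xs) auto

lemma walk_append:
  "walk E (xs@ys) \<longleftrightarrow> walk E xs \<and> walk E ys \<and> (xs \<noteq> [] \<and> ys \<noteq> [] \<longrightarrow> E (last xs) (hd ys))"
  by (induction xs) (auto simp: walk_Cons)

lemma walk_nth: "walk E xs \<Longrightarrow> Suc i < length xs \<Longrightarrow> E (xs!i) (xs!Suc i)"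
proof (induction E xs arbitrary: i rule: walk.induct)
  case (3 E x y xs)
  then show ?case by (cases i) auto
qed auto

lemma path_exists:
  assumes "(\<lambda>a b. E a b \<and> a\<in>A \<and> b\<in>A)\<^sup>*\<^sup>* x y" "y \<in> A"
  shows "\<exists>ps. ps \<noteq> [] \<and> hd ps = x \<and> last ps = y \<and> distinct ps \<and> set ps \<subseteq> A \<and> walk E ps"
  using assms(1)
proof (induction rule: converse_rtranclp_induct)
  case base
  then show ?case using assms(2) by (intro exI[of _ "[y]"]) auto
next
  case (step x z)
  then obtain ps where ps: "ps \<noteq> []" "hd ps = z" "last ps = y" "distinct ps" "set ps \<subseteq> A" "walk E ps"
    by blast
  show ?case
  proof (cases "x \<in> set ps")
    case True
    then obtain us vs where uv: "ps = us @ x # vs" by (meson split_list)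
    show ?thesis
      using ps uv walk_append[of E us "x#vs"]
      by (intro exI[of _ "x#vs"]) auto
  next
    case False
    show ?thesis using ps step(1) False
      by (intro exI[of _ "x#ps"]) (auto simp: walk_Cons)
  qed
qed

lemma len1_last: "length xs = 1 \<Longrightarrow> last xs = hd xs"
  by (cases xs) auto

lemma unique_edge:
  assumes T: "tree V E" and d: "A \<inter> B = {}" and cA: "connected_on E A" and cB: "connected_on E B"
    and a: "a1 \<in> A" "a2 \<in> A" and b: "b1 \<in> B" "b2 \<in> B" and e: "E a1 b1" "E a2 b2"
  shows "a1 = a2 \<and> b1 = b2"
proof (rule ccontr)
  assume ne: "\<not> (a1 = a2 \<and> b1 = b2)"
  have sym: "\<And>x y. E x y \<Longrightarrow> E y x" using T unfolding tree_def simple_graph_def by blast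
  obtain pa where pa: "pa \<noteq> []" "hd pa = a2" "last pa = a1" "distinct pa" "set pa \<subseteq> A" "walk E pa"
    using path_exists[of E A a2 a1] cA a unfolding connected_on_def by blast
  obtain pb where pb: "pb \<noteq> []" "hd pb = b1" "last pb = b2" "distinct pb" "set pb \<subseteq> B" "walk E pb"
    using path_exists[of E B b1 b2] cB b unfolding connected_on_def by blast
  have l: "length (pa @ pb) \<ge> 3"
  proof -
    have "length pa \<ge> 1" "length pb \<ge> 1" using pa pb by (auto simp: Suc_le_eq)
    moreover have "\<not> (length pa = 1 \<and> length pb = 1)"
      using len1_last[of pa] len1_last[of pb] pa pb ne by auto
    ultimately show ?thesis by auto
  qed
  have di: "distinct (pa @ pb)" using pa pb d by auto
  have w: "walk E (pa @ pb)" using pa pb e walk_append[of E pa pb] by auto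
  have "is_cycle E (pa @ pb)"
    unfolding is_cycle_def using l di walk_nth[OF w] pa pb sym e by auto
  then show False using T unfolding tree_def by blast
qed

definition outE :: "'a set \<Rightarrow> ('a \<Rightarrow> 'a \<Rightarrow> bool) \<Rightarrow> 'a set \<Rightarrow> ('a \<times> 'a) set" where
  "outE V E S = {(a,u). a \<in> S \<and> u \<in> V \<and> u \<notin> S \<and> E a u}"

definition sig :: "'a set \<Rightarrow> ('a \<Rightarrow> 'a \<Rightarrow> bool) \<Rightarrow> 'a set \<Rightarrow> 'a set \<Rightarrow> nat" where
  "sig V E s t = (\<Sum>v\<in>V-(s\<union>t). degree V E v - 2)"

definition lvs :: "'a set \<Rightarrow> ('a \<Rightarrow> 'a \<Rightarrow> bool) \<Rightarrow> 'a set \<Rightarrow> 'a set \<Rightarrow> 'a set" where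
  "lvs V E s t = leaves V E - (s\<union>t)"

definition Q :: "'a set \<Rightarrow> ('a \<Rightarrow> 'a \<Rightarrow> bool) \<Rightarrow> 'a set \<Rightarrow> 'a set \<Rightarrow> bool" where
  "Q V E s t \<longleftrightarrow> card (outE V E s) + card (outE V E t) + sig V E s t \<le> card (lvs V E s t) + 2"

lemma Q_sym: "Q V E s t = Q V E t s"
  unfolding Q_def sig_def lvs_def by (simp add: Un_commute add.commute add.left_commute)

lemma subtree_insert:
  assumes "tree V E" "subtree V E s" "x \<in> V" "b \<in> s" "E b x"
  shows "subtree V E (insert x s)"
proof -
  have sym: "\<And>x y. E x y \<Longrightarrow> E y x" using assms(1) unfolding tree_def simple_graph_def by blast
  let ?R = "\<lambda>a c. E a c \<and> a \<in> s \<and> c \<in> s"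
  let ?R' = "\<lambda>a c. E a c \<and> a \<in> insert x s \<and> c \<in> insert x s"
  have mono: "\<And>y z. ?R\<^sup>*\<^sup>* y z \<Longrightarrow> ?R'\<^sup>*\<^sup>* y z"
    by (erule rtranclp_mono[THEN predicate2D, rotated]) auto
  have c: "connected_on E s" "s \<subseteq> V" using assms(2) unfolding subtree_def by auto
  have xb: "?R' x b" "?R' b x" using assms sym by auto
  have "\<forall>y\<in>insert x s. \<forall>z\<in>insert x s. ?R'\<^sup>*\<^sup>* y z"
  proof (intro ballI)
    fix y z assume y: "y \<in> insert x s" and z: "z \<in> insert x s"
    have bz: "?R'\<^sup>*\<^sup>* b z" if "z \<in> s" for z using mono c(1) that assms(4) unfolding connected_on_def by blast
    have yb: "?R'\<^sup>*\<^sup>* y b" if "y \<in> s" for y using mono c(1) that assms(4) unfolding connected_on_def by blast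
    show "?R'\<^sup>*\<^sup>* y z"
    proof (cases "y = x")
      case True
      show ?thesis
      proof (cases "z = x")
        case False
        then have "z \<in> s" using z by auto
        then have "?R'\<^sup>*\<^sup>* b z" by (rule bz)
        then show ?thesis using True converse_rtranclp_into_rtranclp[of ?R' x b z, OF xb(1)] by simp
      qed (use True in auto)
    next
      case False
      then have ys: "y \<in> s" using y by auto
      show ?thesis
      proof (cases "z = x")
        case True
        then show ?thesis using rtranclp.rtrancl_into_rtrancl[of ?R' y b x, OF yb[OF ys] xb(2)] by simp
      next
        case False
        then show ?thesis using z ys mono c(1) unfolding connected_on_def by blast
      qed
    qed
  qed
  then show ?thesis using assms c unfolding subtree_def connected_on_def by auto
qed


lemma grow:
  assumes T: "tree V E" and s: "subtree V E s" and t: "subtree V E t" and d: "s \<inter> t = {}"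
    and x: "x \<in> V" "x \<notin> s" "x \<notin> t" and b: "b \<in> s" "E b x"
    and IH: "Q V E (insert x s) t"
  shows "Q V E s t"
proof -
  have fin: "finite V" and EV: "\<And>a c. E a c \<Longrightarrow> a \<in> V \<and> c \<in> V"
    and sym: "\<And>a c. E a c \<Longrightarrow> E c a" and irr: "\<And>a. \<not> E a a"
    using T unfolding tree_def simple_graph_def by blast+
  have cs: "connected_on E s" using s unfolding subtree_def by auto
  have cx: "connected_on E {x}" unfolding connected_on_def by auto
  have uniq: "c = b" if "c \<in> s" "E c x" for c
    using unique_edge[OF T _ cs cx that(1) b(1) _ _ that(2) b(2)] x by auto
  define N where "N = {u \<in> V. E x u}"
  have degx: "degree V E x = card N" unfolding degree_def N_def by simp
  have finN: "finite N" unfolding N_def using fin by auto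
  have bN: "b \<in> N" unfolding N_def using b sym EV by auto
  have Ns: "N \<inter> s = {b}"
  proof
    show "N \<inter> s \<subseteq> {b}"
    proof
      fix u assume u: "u \<in> N \<inter> s"
      then have "E x u" unfolding N_def by simp
      then have "E u x" by (rule sym)
      then show "u \<in> {b}" using uniq[of u] u by simp
    qed
    show "{b} \<subseteq> N \<inter> s" using bN b(1) by simp
  qed
  define A where "A = {(a,u). a \<in> s \<and> u \<in> V \<and> u \<notin> s \<and> E a u \<and> u \<noteq> x}"
  have sV: "s \<subseteq> V" using s unfolding subtree_def by auto
  have "A \<subseteq> V \<times> V" using sV unfolding A_def by auto
  then have finA: "finite A" using fin by (meson finite_SigmaI finite_subset)
  have O1b: "(b,x) \<notin> A" unfolding A_def by simp
  have O1a: "outE V E s = insert (b,x) A"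
  proof
    show "outE V E s \<subseteq> insert (b,x) A"
    proof
      fix p assume "p \<in> outE V E s"
      then obtain a u where p: "p = (a,u)" "a \<in> s" "u \<in> V" "u \<notin> s" "E a u" unfolding outE_def by auto
      show "p \<in> insert (b,x) A"
      proof (cases "u = x")
        case True
        then have "a = b" using uniq p by blast
        then show ?thesis using p True by simp
      next
        case False
        then show ?thesis using p unfolding A_def by simp
      qed
    qed
    show "insert (b,x) A \<subseteq> outE V E s" using b x unfolding outE_def A_def by auto
  qed
  note O1 = O1a O1b
  have O2: "outE V E (insert x s) = A \<union> (\<lambda>u. (x,u)) ` (N - {b})"
  proof
    show "outE V E (insert x s) \<subseteq> A \<union> (\<lambda>u. (x,u)) ` (N - {b})"
      unfolding outE_def A_def N_def using b by auto
    show "A \<union> (\<lambda>u. (x,u)) ` (N - {b}) \<subseteq> outE V E (insert x s)"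
      unfolding outE_def A_def using Ns irr unfolding N_def by auto
  qed
  have disj: "A \<inter> (\<lambda>u. (x,u)) ` (N - {b}) = {}" unfolding A_def using x by auto
  have c1: "card (outE V E s) = card A + 1" using O1 finA by simp
  have "card (outE V E (insert x s)) = card A + card ((\<lambda>u. (x,u)) ` (N - {b}))"
    unfolding O2 using disj finA finN by (simp add: card_Un_disjoint)
  also have "card ((\<lambda>u. (x,u)) ` (N - {b})) = card N - 1"
    using card_image[of "\<lambda>u. (x,u)" "N - {b}"] bN finN by (simp add: inj_on_def)
  finally have c2: "card (outE V E (insert x s)) = card A + (card N - 1)" .
  have N1: "card N \<ge> 1" using bN finN by (metis One_nat_def Suc_leI card_gt_0_iff empty_iff)
  have VD: "V - (s \<union> t) = insert x (V - (insert x s \<union> t))" "x \<notin> V - (insert x s \<union> t)"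
    using x by auto
  have sg: "sig V E s t = (card N - 2) + sig V E (insert x s) t"
    unfolding sig_def VD(1) using VD(2) fin degx by simp
  have lv: "card (lvs V E s t) = card (lvs V E (insert x s) t) + (if card N = 1 then 1 else 0)"
  proof -
    have finL: "finite (lvs V E (insert x s) t)" unfolding lvs_def leaves_def using fin by auto
    show ?thesis
    proof (cases "card N = 1")
      case True
      then have "lvs V E s t = insert x (lvs V E (insert x s) t)" "x \<notin> lvs V E (insert x s) t"
        unfolding lvs_def leaves_def using x degx by auto
      then show ?thesis using finL True by simp
    next
      case False
      then have "lvs V E s t = lvs V E (insert x s) t"
        unfolding lvs_def leaves_def using x degx by auto
      then show ?thesis using False by simp
    qed
  qed
  show ?thesis using IH c1 c2 sg lv N1 unfolding Q_def
    by (cases "card N = 1") auto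
qed

lemma cross:
  assumes "R\<^sup>*\<^sup>* a v" "a \<in> S" "v \<notin> S"
  shows "\<exists>p q. R p q \<and> p \<in> S \<and> q \<notin> S"
  using assms
proof (induction rule: rtranclp_induct)
  case (step y z)
  then show ?case by blast
qed auto

lemma key_aux:
  "tree V E \<Longrightarrow> card (V - (s \<union> t)) = n \<Longrightarrow> subtree V E s \<Longrightarrow> subtree V E t \<Longrightarrow> s \<inter> t = {}
   \<Longrightarrow> Q V E s t"
proof (induction n arbitrary: s t rule: less_induct)
  case (less n)
  note T = less.prems(1)
  have fin: "finite V" and EV: "\<And>a c. E a c \<Longrightarrow> a \<in> V \<and> c \<in> V"
    and sym: "\<And>a c. E a c \<Longrightarrow> E c a" and cV: "connected_on E V"
    using T unfolding tree_def simple_graph_def by blast+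
  have s: "subtree V E s" and t: "subtree V E t" and d: "s \<inter> t = {}" using less.prems by auto
  have cs: "connected_on E s" "s \<subseteq> V" "s \<noteq> {}" and ct: "connected_on E t" "t \<subseteq> V" "t \<noteq> {}"
    using s t unfolding subtree_def by auto
  show ?case
  proof (cases "V - (s \<union> t) = {}")
    case True
    have o1: "card (outE V E s) \<le> 1"
    proof -
      have "finite (outE V E s)"
        by (rule finite_subset[of _ "V \<times> V"]) (use fin EV in \<open>auto simp: outE_def\<close>)
      moreover have "\<forall>p\<in>outE V E s. \<forall>q\<in>outE V E s. p = q"
      proof (intro ballI)
        fix p q assume "p \<in> outE V E s" "q \<in> outE V E s"
        then obtain a1 b1 a2 b2 where "p = (a1,b1)" "q = (a2,b2)" "a1 \<in> s" "a2 \<in> s" "b1 \<in> t" "b2 \<in> t"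
          "E a1 b1" "E a2 b2" using True unfolding outE_def by force
        then show "p = q" using unique_edge[OF T d cs(1) ct(1)] by blast
      qed
      ultimately show ?thesis using card_le_Suc0_iff_eq by auto
    qed
    have o2: "card (outE V E t) \<le> 1"
    proof -
      have "finite (outE V E t)"
        by (rule finite_subset[of _ "V \<times> V"]) (use fin EV in \<open>auto simp: outE_def\<close>)
      moreover have "\<forall>p\<in>outE V E t. \<forall>q\<in>outE V E t. p = q"
      proof (intro ballI)
        fix p q assume "p \<in> outE V E t" "q \<in> outE V E t"
        then obtain a1 b1 a2 b2 where "p = (a1,b1)" "q = (a2,b2)" "a1 \<in> t" "a2 \<in> t" "b1 \<in> s" "b2 \<in> s"
          "E a1 b1" "E a2 b2" using True unfolding outE_def by force
        moreover have "t \<inter> s = {}" using d by auto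
        ultimately show "p = q" using unique_edge[OF T _ ct(1) cs(1)] by blast
      qed
      ultimately show ?thesis using card_le_Suc0_iff_eq by auto
    qed
    have "sig V E s t = 0" unfolding sig_def using True by (simp only: sum.empty)
    then show ?thesis using o1 o2 unfolding Q_def by simp
  next
    case False
    then obtain v where v: "v \<in> V" "v \<notin> s \<union> t" by auto
    obtain a where a: "a \<in> s" using cs by auto
    have "(\<lambda>p q. E p q \<and> p \<in> V \<and> q \<in> V)\<^sup>*\<^sup>* a v" using cV a cs v unfolding connected_on_def by blast
    then obtain p q where pq: "E p q" "p \<in> V" "q \<in> V" "p \<in> s \<union> t" "q \<notin> s \<union> t"
      using cross[of _ a v "s \<union> t"] a v by blast
    have lt: "card (V - (insert q s \<union> t)) < n" "card (V - (s \<union> insert q t)) < n"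
    proof -
      have "V - (insert q s \<union> t) = (V - (s \<union> t)) - {q}" "V - (s \<union> insert q t) = (V - (s \<union> t)) - {q}"
        by auto
      moreover have "card ((V - (s \<union> t)) - {q}) < card (V - (s \<union> t))"
        using pq fin by (intro card_Diff1_less) auto
      ultimately show "card (V - (insert q s \<union> t)) < n" "card (V - (s \<union> insert q t)) < n"
        using less.prems(2) by auto
    qed
    show ?thesis
    proof (cases "p \<in> s")
      case True
      have "Q V E (insert q s) t"
        using less.IH[OF lt(1) T refl subtree_insert[OF T s pq(3) True pq(1)] t] d pq by auto
      then show ?thesis using grow[OF T s t d pq(3) _ _ True pq(1)] pq by auto
    next
      case False
      then have pt: "p \<in> t" using pq by auto
      have "Q V E s (insert q t)"
        using less.IH[OF lt(2) T refl s subtree_insert[OF T t pq(3) pt pq(1)]] d pq by auto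
      then have "Q V E (insert q t) s" by (simp add: Q_sym)
      moreover have "t \<inter> s = {}" using d by auto
      ultimately have "Q V E t s" using grow[OF T t s _ pq(3) _ _ pt pq(1)] pq by auto
      then show ?thesis by (simp add: Q_sym)
    qed
  qed
qed

theorem lemma3:
  fixes V :: "'a set" and E :: "'a \<Rightarrow> 'a \<Rightarrow> bool" and s t :: "'a set" and k l :: nat
  assumes "tree V E"
    and "card (leaves V E) = k"
    and "1 \<le> l"
    and "subtree V E s" and "subtree V E t" and "s \<inter> t = {}"
    and "card (boundary V E s) = l"
    and "int (card (boundary V E t)) = int k - int l + 2"
  shows "\<forall>v\<in>V. degree V E v > 2 \<longrightarrow> v \<in> s \<or> v \<in> t"
proof (intro ballI impI, rule ccontr)
  fix v assume v: "v \<in> V" "degree V E v > 2" "\<not> (v \<in> s \<or> v \<in> t)"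
  have fin: "finite V" and EV: "\<And>a c. E a c \<Longrightarrow> a \<in> V \<and> c \<in> V"
    using assms(1) unfolding tree_def simple_graph_def by blast+
  have q: "Q V E s t" using key_aux[OF assms(1) refl assms(4,5,6)] .
  have finO: "finite (outE V E S)" for S
    by (rule finite_subset[of _ "V \<times> V"]) (use fin EV in \<open>auto simp: outE_def\<close>)
  have bd: "card (boundary V E S) \<le> card (outE V E S)" for S
  proof -
    have "boundary V E S = fst ` outE V E S" unfolding boundary_def outE_def by force
    then show ?thesis using card_image_le[OF finO] by simp
  qed
  have "finite (leaves V E)" using fin unfolding leaves_def by auto
  then have lv: "card (lvs V E s t) \<le> k"
    using assms(2) card_mono[of "leaves V E" "leaves V E - (s \<union> t)"] unfolding lvs_def by auto
  have sg: "sig V E s t \<ge> 1"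
  proof -
    have "degree V E v - 2 \<le> sig V E s t" unfolding sig_def
      using v fin by (intro member_le_sum) auto
    then show ?thesis using v by linarith
  qed
  have "card (boundary V E s) + card (boundary V E t) + 1 \<le> k + 2"
    using q bd[of s] bd[of t] lv sg unfolding Q_def by linarith
  then show False using assms(7,8) by linarith
qed

end
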